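(* Let $n$ be a positive integer, let $\lambda$ be a partition with at most $n$ nonzero parts, and let $\beta$ be a nonzero complex number. Then $$G_\lambda(\beta,\beta,\dots,\beta\mid -\beta^{-1})=\beta^{|\lambda|},$$ where all $n$ variables are specialized to $\beta$.
   Context: A partition $\lambda$ is identified with its Young diagram $\{(i,j)\in\mathbb{Z}_{>0}^2 : j\le\lambda_i\}$ and $|\lambda|=\sum_i\lambda_i$. A set-valued tableau of shape $\lambda$ with entries in $[n]=\{1,\dots,n\}$ assigns a non-empty subset $T_{i,j}\subseteq[n]$ to each box $(i,j)\in\lambda$ such that $\max T_{i,j}\le\min T_{i,j+1}$ whenever $(i,j),(i,j+1)\in\lambda$ and $\max T_{i,j}<\min T_{i+1,j}$ whenever $(i,j),(i+1,j)\in\lambda$; $\mathrm{SVT}(\lambda,n)$ is the set of these. For such $T$, $|T|=\sum_{(i,j)}|T_{i,j}|$, $\omega_k(T)$ is the number of boxes whose set contains $k$, and $x^{\omega(T)}=\prod_{k=1}^n x_k^{\omega_k(T)}$. The stable Grothendieck polynomial is $G_\lambda(x_1,\dots,x_n\mid\beta)=\sum_{T\in\mathrm{SVT}(\lambda,n)}\beta^{|T|-|\lambda|}x^{\omega(T)}$. *)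

theory Defs
  imports Complex_Main
begin

text \<open>A partition is a weakly decreasing list of positive integers
  (its nonzero parts). Its number of nonzero parts is its length.\<close>
definition is_partition :: "nat list \<Rightarrow> bool" where
  "is_partition lam \<longleftrightarrow> sorted_wrt (\<ge>) lam \<and> (\<forall>p\<in>set lam. 0 < p)"

definition young :: "nat list \<Rightarrow> (nat \<times> nat) set" where
  "young lam = {(i, j). 1 \<le> i \<and> i \<le> length lam \<and> 1 \<le> j \<and> j \<le> lam ! (i - 1)}"

definition psize :: "nat list \<Rightarrow> nat" where
  "psize lam = sum_list lam"

text \<open>Set-valued tableaux of shape lam with entries in {1..n}; boxes outside the
  diagram are assigned the empty set (canonical representative).\<close>
definition SVT :: "nat list \<Rightarrow> nat \<Rightarrow> ((nat \<times> nat) \<Rightarrow> nat set) set" where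
  "SVT lam n = {T.
     (\<forall>b\<in>young lam. T b \<noteq> {} \<and> T b \<subseteq> {1..n}) \<and>
     (\<forall>b. b \<notin> young lam \<longrightarrow> T b = {}) \<and>
     (\<forall>i j. (i, j) \<in> young lam \<and> (i, j + 1) \<in> young lam \<longrightarrow>
            Max (T (i, j)) \<le> Min (T (i, j + 1))) \<and>
     (\<forall>i j. (i, j) \<in> young lam \<and> (i + 1, j) \<in> young lam \<longrightarrow>
            Max (T (i, j)) < Min (T (i + 1, j)))}"

definition tsize :: "nat list \<Rightarrow> ((nat \<times> nat) \<Rightarrow> nat set) \<Rightarrow> nat" where
  "tsize lam T = (\<Sum>b\<in>young lam. card (T b))"

definition omega :: "nat list \<Rightarrow> ((nat \<times> nat) \<Rightarrow> nat set) \<Rightarrow> nat \<Rightarrow> nat" where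
  "omega lam T k = card {b \<in> young lam. k \<in> T b}"

definition stableG :: "nat list \<Rightarrow> nat \<Rightarrow> (nat \<Rightarrow> complex) \<Rightarrow> complex \<Rightarrow> complex" where
  "stableG lam n x \<beta> =
     (\<Sum>T\<in>SVT lam n. \<beta> ^ (tsize lam T - psize lam) * (\<Prod>k=1..n. x k ^ omega lam T k))"

end

theory Submission
  imports Defs "HOL-Library.FuncSet"
begin

lemma young_mem: "(i,j) \<in> young lam \<longleftrightarrow> 1 \<le> i \<and> i \<le> length lam \<and> 1 \<le> j \<and> j \<le> lam!(i-1)"
  by (simp add: young_def)

lemma young_Nil[simp]: "young [] = {}"
  by (auto simp: young_def)

lemma young_cons: "young (a # l) = ({1} \<times> {1..a}) \<union> (\<lambda>(i,j). (i+1,j)) ` young l"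
proof (rule set_eqI)
  fix x :: "nat \<times> nat"
  obtain i j where x: "x = (i,j)" by (cases x)
  show "x \<in> young (a # l) \<longleftrightarrow> x \<in> ({1} \<times> {1..a}) \<union> (\<lambda>(i,j). (i+1,j)) ` young l"
  proof (cases "i \<le> 1")
    case True
    then show ?thesis unfolding x young_def by (auto simp: image_iff)
  next
    case False
    then obtain k where k: "i = Suc k" "k \<ge> 1" by (cases i) auto
    then show ?thesis unfolding x young_def by (auto simp: image_iff)
  qed
qed

lemma finite_young: "finite (young lam)"
proof (induction lam)
  case Nil then show ?case by simp
next
  case (Cons a l) then show ?case by (simp add: young_cons)
qed

lemma card_young: "card (young lam) = psize lam"
proof (induction lam)
  case Nil then show ?case by (simp add: psize_def)
next
  case (Cons a l)
  have inj: "inj_on (\<lambda>(i::nat,j::nat). (i+1,j)) (young l)" by (auto simp: inj_on_def)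
  have disj: "({1} \<times> {1..a}) \<inter> (\<lambda>(i,j). (i+1,j)) ` young l = {}"
    by (auto simp: young_def)
  have "card (young (a#l)) = card ({1::nat} \<times> {1..a}) + card ((\<lambda>(i,j). (i+1,j)) ` young l)"
    unfolding young_cons by (rule card_Un_disjoint) (use disj finite_young in auto)
  also have "\<dots> = a + psize l" using card_image[OF inj] Cons by simp
  finally show ?case by (simp add: psize_def)
qed

lemma part_mono: "is_partition lam \<Longrightarrow> i < j \<Longrightarrow> j < length lam \<Longrightarrow> lam!j \<le> lam!i"
  unfolding is_partition_def using sorted_wrt_nth_less by fastforce

lemma part_tl: "is_partition lam \<Longrightarrow> is_partition (tl lam)"
  unfolding is_partition_def by (cases lam) auto

lemma young_tl: assumes p: "is_partition lam" shows "young (tl lam) = {(i,j). (i,j) \<in> young lam \<and> (i+1,j) \<in> young lam}"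
proof (rule set_eqI)
  fix x :: "nat \<times> nat"
  obtain i j where x: "x = (i,j)" by (cases x)
  show "x \<in> young (tl lam) \<longleftrightarrow> x \<in> {(i,j). (i,j) \<in> young lam \<and> (i+1,j) \<in> young lam}"
  proof
    assume "x \<in> young (tl lam)"
    then have h: "1 \<le> i" "i \<le> length lam - 1" "1 \<le> j" "j \<le> lam ! i" unfolding x young_def
      by (auto simp: nth_tl)
    have "lam ! i \<le> lam ! (i-1)" using part_mono[OF p, of "i-1" i] h by simp
    then show "x \<in> {(i,j). (i,j) \<in> young lam \<and> (i+1,j) \<in> young lam}"
      unfolding x young_def using h by auto
  next
    assume "x \<in> {(i,j). (i,j) \<in> young lam \<and> (i+1,j) \<in> young lam}"
    then show "x \<in> young (tl lam)" unfolding x young_def by (auto simp: nth_tl)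
  qed
qed

lemma young_left: "(i,j+1) \<in> young lam \<Longrightarrow> 1 \<le> j \<Longrightarrow> (i,j) \<in> young lam"
  by (auto simp: young_def)

lemma young_up: "is_partition lam \<Longrightarrow> (i+1,j) \<in> young lam \<Longrightarrow> 1 \<le> i \<Longrightarrow> (i,j) \<in> young lam"
  using part_mono[of lam "i-1" i] by (auto simp: young_def)


lemma svt_out: "T \<in> SVT lam N \<Longrightarrow> b \<notin> young lam \<Longrightarrow> T b = {}"
  unfolding SVT_def by (cases b) auto

lemma svt_sub: "T \<in> SVT lam N \<Longrightarrow> T b \<subseteq> {1..N}"
  using svt_out[of T lam N b] unfolding SVT_def by (cases "b \<in> young lam") auto

lemma svt_fin: "T \<in> SVT lam N \<Longrightarrow> finite (T b)"
  using svt_sub[of T lam N b] finite_subset by blast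

lemma svt_ne: "T \<in> SVT lam N \<Longrightarrow> b \<in> young lam \<Longrightarrow> T b \<noteq> {}"
  unfolding SVT_def by auto


lemma svt_h: "T \<in> SVT lam N \<Longrightarrow> (i,j) \<in> young lam \<Longrightarrow> (i,j+1) \<in> young lam \<Longrightarrow> Max (T (i,j)) \<le> Min (T (i,j+1))"
  unfolding SVT_def by auto

lemma svt_v: "T \<in> SVT lam N \<Longrightarrow> (i,j) \<in> young lam \<Longrightarrow> (i+1,j) \<in> young lam \<Longrightarrow> Max (T (i,j)) < Min (T (i+1,j))"
  unfolding SVT_def by auto

lemma finite_SVT: "finite (SVT lam N)"
proof -
  let ?e = "\<lambda>f b. if b \<in> young lam then f b else ({}::nat set)"
  have "SVT lam N \<subseteq> ?e ` (PiE (young lam) (\<lambda>_. Pow {1..N}))"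
  proof
    fix T assume T: "T \<in> SVT lam N"
    have "T = ?e (restrict T (young lam))"
    proof (rule ext)
      fix b show "T b = ?e (restrict T (young lam)) b"
        by (cases "b \<in> young lam") (auto simp: svt_out[OF T] restrict_apply)
    qed
    moreover have "restrict T (young lam) \<in> PiE (young lam) (\<lambda>_. Pow {1..N})"
      using svt_sub[OF T] by auto
    ultimately show "T \<in> ?e ` (PiE (young lam) (\<lambda>_. Pow {1..N}))" by blast
  qed
  moreover have "finite (PiE (young lam) (\<lambda>_. Pow {1..N}))"
    by (intro finite_PiE finite_young) auto
  ultimately show ?thesis using finite_subset by blast
qed

lemma tsize_ge: assumes T: "T \<in> SVT lam N" shows "psize lam \<le> tsize lam T"
proof -
  have "psize lam = (\<Sum>b\<in>young lam. 1)" using card_young by simp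
  also have "\<dots> \<le> tsize lam T" unfolding tsize_def
  proof (rule sum_mono)
    fix b assume "b \<in> young lam"
    then show "1 \<le> card (T b)" using svt_ne[OF T] svt_fin[OF T]
      by (simp add: Suc_leI card_gt_0_iff)
  qed
  finally show ?thesis .
qed

lemma invol_sum:
  fixes f :: "'a \<Rightarrow> complex"
  assumes fin: "finite S" and gS: "\<And>x. x \<in> S \<Longrightarrow> g x \<in> S"
    and gg: "\<And>x. x \<in> S \<Longrightarrow> g (g x) = x"
    and sg: "\<And>x. x \<in> S \<Longrightarrow> g x \<noteq> x \<Longrightarrow> f (g x) = - f x"
  shows "sum f S = sum f {x\<in>S. g x = x}"
proof -
  let ?U = "{x\<in>S. g x \<noteq> x}"
  have split: "sum f S = sum f {x\<in>S. g x = x} + sum f ?U"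
    using fin by (subst sum.union_disjoint[symmetric]) (auto intro: sum.cong)
  have "sum f ?U = sum (\<lambda>x. f (g x)) ?U"
  proof (rule sum.reindex_bij_witness[of _ g g])
    fix a assume a: "a \<in> ?U"
    then show "g (g a) = a" using gg by auto
    show "g a \<in> ?U" using a gS gg by fastforce
    show "f (g (g a)) = f a" using a gg by auto
  next
    fix a assume a: "a \<in> ?U"
    then show "g (g a) = a" using gg by auto
    show "g a \<in> ?U" using a gS gg by fastforce
  qed
  also have "\<dots> = - sum f ?U" using sg by (simp add: sum_negf)
  finally have "sum f ?U = 0" by simp
  then show ?thesis using split by simp
qed


lemma svt_upd:
  assumes T: "T \<in> SVT lam N" and b: "(i,j) \<in> young lam" and ne: "S \<noteq> {}" and sub: "S \<subseteq> {1..N}"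
    and mn: "Min S = Min (T (i,j))"
    and r: "(i,j+1) \<in> young lam \<Longrightarrow> Max S \<le> Min (T (i,j+1))"
    and d: "(i+1,j) \<in> young lam \<Longrightarrow> Max S < Min (T (i+1,j))"
  shows "T((i,j) := S) \<in> SVT lam N"
  unfolding SVT_def
proof (intro CollectI conjI allI impI ballI)
  fix c assume "c \<in> young lam"
  then show "(T((i,j) := S)) c \<noteq> {}" "(T((i,j) := S)) c \<subseteq> {1..N}"
    using ne sub svt_ne[OF T] svt_sub[OF T] by auto
next
  fix c assume "c \<notin> young lam"
  then show "(T((i,j) := S)) c = {}" using b svt_out[OF T] by auto
next
  fix i' j' assume h: "(i', j') \<in> young lam \<and> (i', j' + 1) \<in> young lam"
  then show "Max ((T((i,j) := S)) (i', j')) \<le> Min ((T((i,j) := S)) (i', j' + 1))"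
    using svt_h[OF T, of i' j'] r mn by auto
next
  fix i' j' assume h: "(i', j') \<in> young lam \<and> (i' + 1, j') \<in> young lam"
  then show "Max ((T((i,j) := S)) (i', j')) < Min ((T((i,j) := S)) (i' + 1, j'))"
    using svt_v[OF T, of i' j'] d mn by auto
qed

definition canA :: "nat list \<Rightarrow> nat \<Rightarrow> ((nat \<times> nat) \<Rightarrow> nat set) \<Rightarrow> (nat \<times> nat) set" where
  "canA lam N T = {(i,j). (i,j) \<in> young lam \<and> (i+1,j) \<notin> young lam \<and> T (i,j) - {N} \<noteq> {} \<and>
      ((i,j+1) \<notin> young lam \<or> T (i,j+1) = {N})}"

definition tog :: "nat \<Rightarrow> nat set \<Rightarrow> nat set" where
  "tog N S = (if N \<in> S then S - {N} else insert N S)"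

definition invo :: "nat list \<Rightarrow> nat \<Rightarrow> ((nat \<times> nat) \<Rightarrow> nat set) \<Rightarrow> ((nat \<times> nat) \<Rightarrow> nat set)" where
  "invo lam N T = (if canA lam N T = {} then T else
     T((SOME b. b \<in> canA lam N T) := tog N (T (SOME b. b \<in> canA lam N T))))"

lemma tog_minus[simp]: "tog N S - {N} = S - {N}"
  by (auto simp: tog_def)

lemma tog_tog[simp]: "tog N (tog N S) = S"
  by (auto simp: tog_def)

lemma tog_neq: "tog N S \<noteq> S"
  by (auto simp: tog_def)

lemma tog_single: "S - {N} \<noteq> {} \<Longrightarrow> tog N S \<noteq> {N}"
  by (auto simp: tog_def)

lemma canA_cong: "(\<And>c. T' c - {N} = T c - {N}) \<Longrightarrow> (\<And>c. (T' c = {N}) \<longleftrightarrow> (T c = {N})) \<Longrightarrow>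
   canA lam N T' = canA lam N T"
  by (simp add: canA_def)

lemma canA_upd: assumes b: "b \<in> canA lam N T"
  shows "canA lam N (T(b := tog N (T b))) = canA lam N T"
proof (rule canA_cong)
  fix c
  show "(T(b := tog N (T b))) c - {N} = T c - {N}" by simp
  have "T b - {N} \<noteq> {}" using b by (auto simp: canA_def)
  then show "((T(b := tog N (T b))) c = {N}) \<longleftrightarrow> (T c = {N})"
    using tog_single[of "T b" N] by auto
qed

lemma tog_svt: assumes T: "T \<in> SVT lam N" and b: "b \<in> canA lam N T"
  shows "T(b := tog N (T b)) \<in> SVT lam N"
proof -
  obtain i j where bij: "b = (i,j)" by (cases b)
  have yb: "(i,j) \<in> young lam" and nd: "(i+1,j) \<notin> young lam" and nn: "T (i,j) - {N} \<noteq> {}"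
    and rt: "(i,j+1) \<notin> young lam \<or> T (i,j+1) = {N}"
    using b unfolding bij canA_def by auto
  let ?A = "T (i,j)"
  have fin: "finite ?A" by (rule svt_fin[OF T])
  have sub0: "?A \<subseteq> {1..N}" by (rule svt_sub[OF T])
  obtain x where x: "x \<in> ?A" "x \<noteq> N" using nn by auto
  have xN: "x < N" using x sub0 by force
  have ne0: "?A \<noteq> {}" using x by auto
  have mS: "Min ?A \<in> ?A" using Min_in[OF fin ne0] .
  have mle: "Min ?A \<le> x" using Min_le[OF fin x(1)] .
  show ?thesis unfolding bij
  proof (cases "N \<in> ?A")
    case True
    let ?S = "?A - {N}"
    have tg: "tog N ?A = ?S" using \<open>N \<in> ?A\<close> by (simp add: tog_def)
    have mn: "Min ?S = Min ?A"
      by (rule Min_eqI) (use fin mS mle xN in auto)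
    have mx: "Max ?S \<le> Max ?A" by (rule Max_mono) (use nn fin in auto)
    show "T((i,j) := tog N ?A) \<in> SVT lam N" unfolding tg
    proof (rule svt_upd[OF T yb nn])
      show "?S \<subseteq> {1..N}" using sub0 by auto
      show "Min ?S = Min ?A" by (rule mn)
      show "Max ?S \<le> Min (T (i, j + 1))" if "(i,j+1) \<in> young lam"
        using mx svt_h[OF T yb that] by simp
      show "Max ?S < Min (T (i + 1, j))" if "(i+1,j) \<in> young lam" using nd that by simp
    qed
  next
    case False
    let ?S = "insert N ?A"
    have tg: "tog N ?A = ?S" using \<open>N \<notin> ?A\<close> by (simp add: tog_def)
    have mn: "Min ?S = Min ?A"
      by (rule Min_eqI) (use fin mS mle xN in auto)
    have mx: "Max ?S \<le> N" using fin sub0 by (auto simp: Max_le_iff)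
    show "T((i,j) := tog N ?A) \<in> SVT lam N" unfolding tg
    proof (rule svt_upd[OF T yb])
      show "?S \<noteq> {}" by simp
      show "?S \<subseteq> {1..N}" using sub0 xN by auto
      show "Min ?S = Min ?A" by (rule mn)
      show "Max ?S \<le> Min (T (i, j + 1))" if "(i,j+1) \<in> young lam"
        using mx rt that by simp
      show "Max ?S < Min (T (i + 1, j))" if "(i+1,j) \<in> young lam" using nd that by simp
    qed
  qed
qed


lemma canA_young: "c \<in> canA lam N T \<Longrightarrow> c \<in> young lam"
  by (cases c) (simp add: canA_def)

lemma invo_ne: assumes "canA lam N T \<noteq> {}"
  shows "(SOME b. b \<in> canA lam N T) \<in> canA lam N T"
    "invo lam N T = T((SOME b. b \<in> canA lam N T) := tog N (T (SOME b. b \<in> canA lam N T)))"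
  using assms by (auto simp: invo_def some_in_eq)

lemma invo_svt: assumes T: "T \<in> SVT lam N" shows "invo lam N T \<in> SVT lam N"
proof (cases "canA lam N T = {}")
  case True then show ?thesis using T by (simp add: invo_def)
next
  case False
  show ?thesis using invo_ne[OF False] tog_svt[OF T invo_ne(1)[OF False]] by simp
qed

lemma invo_invo: "invo lam N (invo lam N T) = T"
proof (cases "canA lam N T = {}")
  case True then show ?thesis by (simp add: invo_def)
next
  case False
  let ?b = "SOME b. b \<in> canA lam N T"
  have b: "?b \<in> canA lam N T" and e: "invo lam N T = T(?b := tog N (T ?b))"
    using invo_ne[OF False] by auto
  have c: "canA lam N (invo lam N T) = canA lam N T" unfolding e by (rule canA_upd[OF b])
  show ?thesis using False c unfolding invo_def[of lam N "invo lam N T"] by (simp add: e)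
qed

lemma invo_fix: "invo lam N T = T \<longleftrightarrow> canA lam N T = {}"
proof (cases "canA lam N T = {}")
  case True then show ?thesis by (simp add: invo_def)
next
  case False
  let ?b = "SOME b. b \<in> canA lam N T"
  have e: "invo lam N T = T(?b := tog N (T ?b))"
    using invo_ne[OF False] by auto
  have "invo lam N T ?b \<noteq> T ?b" unfolding e using tog_neq by simp
  then show ?thesis using False by auto
qed

lemma tsize_upd: "b \<in> young lam \<Longrightarrow> tsize lam (T(b:=S)) + card (T b) = tsize lam T + card S"
proof -
  assume b: "b \<in> young lam"
  have 1: "tsize lam (T(b:=S)) = card S + (\<Sum>c\<in>young lam - {b}. card ((T(b:=S)) c))"
    unfolding tsize_def using sum.remove[OF finite_young b, of "\<lambda>c. card ((T(b:=S)) c)"] by simp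
  have 2: "tsize lam T = card (T b) + (\<Sum>c\<in>young lam - {b}. card (T c))"
    unfolding tsize_def using sum.remove[OF finite_young b, of "\<lambda>c. card (T c)"] by simp
  have 3: "(\<Sum>c\<in>young lam - {b}. card ((T(b:=S)) c)) = (\<Sum>c\<in>young lam - {b}. card (T c))"
    by (rule sum.cong) auto
  show ?thesis using 1 2 3 by simp
qed

definition sg :: "nat list \<Rightarrow> ((nat \<times> nat) \<Rightarrow> nat set) \<Rightarrow> complex" where
  "sg lam T = (-1) ^ (tsize lam T - psize lam)"

lemma invo_sign: assumes T: "T \<in> SVT lam N" and ne: "invo lam N T \<noteq> T"
  shows "sg lam (invo lam N T) = - sg lam T"
proof -
  have F: "canA lam N T \<noteq> {}" using ne by (simp add: invo_fix)
  let ?b = "SOME b. b \<in> canA lam N T"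
  have b: "?b \<in> canA lam N T" and e: "invo lam N T = T(?b := tog N (T ?b))"
    using invo_ne[OF F] by auto
  have yb: "?b \<in> young lam" using canA_young[OF b] .
  have T': "invo lam N T \<in> SVT lam N" by (rule invo_svt[OF T])
  have p1: "psize lam \<le> tsize lam T" by (rule tsize_ge[OF T])
  have p2: "psize lam \<le> tsize lam (invo lam N T)" by (rule tsize_ge[OF T'])
  have fin: "finite (T ?b)" by (rule svt_fin[OF T])
  have ts: "tsize lam (invo lam N T) + card (T ?b) = tsize lam T + card (tog N (T ?b))"
    unfolding e by (rule tsize_upd[OF yb])
  show ?thesis
  proof (cases "N \<in> T ?b")
    case True
    have "card (tog N (T ?b)) + 1 = card (T ?b)"
      using \<open>N \<in> T ?b\<close> fin by (metis card_Suc_Diff1 Suc_eq_plus1 tog_def)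
    then have "tsize lam T = Suc (tsize lam (invo lam N T))" using ts by linarith
    then have "tsize lam T - psize lam = Suc (tsize lam (invo lam N T) - psize lam)" using p2 by linarith
    then show ?thesis unfolding sg_def by simp
  next
    case False
    have "card (tog N (T ?b)) = card (T ?b) + 1"
      using \<open>N \<notin> T ?b\<close> fin by (simp add: tog_def)
    then have "tsize lam (invo lam N T) = Suc (tsize lam T)" using ts by linarith
    then have "tsize lam (invo lam N T) - psize lam = Suc (tsize lam T - psize lam)" using p1 by linarith
    then show ?thesis unfolding sg_def by simp
  qed
qed


lemma sum_fixed: "(\<Sum>T\<in>SVT lam N. sg lam T) = (\<Sum>T\<in>{T\<in>SVT lam N. canA lam N T = {}}. sg lam T)"
proof -
  have "(\<Sum>T\<in>SVT lam N. sg lam T) = (\<Sum>T\<in>{T\<in>SVT lam N. invo lam N T = T}. sg lam T)"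
    by (rule invol_sum[OF finite_SVT]) (simp_all add: invo_svt invo_invo invo_sign)
  then show ?thesis by (simp add: invo_fix)
qed

lemma svt_Max_le: assumes T: "T \<in> SVT lam N" and b: "b \<in> young lam" shows "Max (T b) \<le> N"
  using Max_in[OF svt_fin[OF T] svt_ne[OF T b]] svt_sub[OF T, of b] by auto

lemma svt_Min_le: assumes T: "T \<in> SVT lam N" and b: "b \<in> young lam" shows "Min (T b) \<le> N"
  using Min_in[OF svt_fin[OF T] svt_ne[OF T b]] svt_sub[OF T, of b] by auto

lemma fixed_low: assumes T: "T \<in> SVT lam N" and a: "(i,j) \<in> young lam" "(i+1,j) \<in> young lam"
  shows "N \<notin> T (i,j)"
proof
  assume N: "N \<in> T (i,j)"
  have "N \<le> Max (T (i,j))" using Max_ge[OF svt_fin[OF T] N] .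
  moreover have "Max (T (i,j)) < Min (T (i+1,j))" by (rule svt_v[OF T a])
  moreover have "Min (T (i+1,j)) \<le> N" by (rule svt_Min_le[OF T a(2)])
  ultimately show False by simp
qed

lemma fixed_top: assumes T: "T \<in> SVT lam N" and A: "canA lam N T = {}"
  shows "(i,j) \<in> young lam \<Longrightarrow> (i+1,j) \<notin> young lam \<Longrightarrow> T (i,j) = {N}"
proof (induction "lam!(i-1) - j" arbitrary: j rule: less_induct)
  case (less j)
  have ne: "T (i,j) \<noteq> {}" by (rule svt_ne[OF T less.prems(1)])
  have rt: "(i,j+1) \<notin> young lam \<or> T (i,j+1) = {N}"
  proof (cases "(i,j+1) \<in> young lam")
    case yes: True
    have j1: "1 \<le> j" using less.prems(1) by (simp add: young_def)
    have "(i+1,j+1) \<notin> young lam" using young_left[of "i+1" j lam] j1 less.prems(2) by blast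
    moreover have "j+1 \<le> lam!(i-1)" using yes by (simp add: young_def)
    then have "lam!(i-1) - (j+1) < lam!(i-1) - j" by linarith
    ultimately have "T (i,j+1) = {N}" using less.hyps[of "j+1"] yes by blast
    then show ?thesis by simp
  qed simp
  have "(i,j) \<notin> canA lam N T" using A by simp
  then have "T (i,j) - {N} = {}" using less.prems rt unfolding canA_def by blast
  then show ?case using ne by blast
qed

definition Rm :: "nat \<Rightarrow> ((nat \<times> nat) \<Rightarrow> nat set) \<Rightarrow> ((nat \<times> nat) \<Rightarrow> nat set)" where
  "Rm N T = (\<lambda>b. T b - {N})"

definition Ex :: "nat list \<Rightarrow> nat \<Rightarrow> ((nat \<times> nat) \<Rightarrow> nat set) \<Rightarrow> ((nat \<times> nat) \<Rightarrow> nat set)" where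
  "Ex lam N T = (\<lambda>b. if b \<in> young lam \<and> b \<notin> young (tl lam) then {N} else T b)"

lemma Rm_svt: assumes p: "is_partition lam" and T: "T \<in> SVT lam (Suc n)" and A: "canA lam (Suc n) T = {}"
  shows "Rm (Suc n) T \<in> SVT (tl lam) n"
proof -
  have M: "young (tl lam) = {(i,j). (i,j) \<in> young lam \<and> (i+1,j) \<in> young lam}" by (rule young_tl[OF p])
  have same: "T (i,j) - {Suc n} = T (i,j)" if "(i,j) \<in> young (tl lam)" for i j
    using fixed_low[OF T, of i j] that M by auto
  show ?thesis unfolding SVT_def
  proof (intro CollectI conjI allI impI ballI)
    fix b assume b: "b \<in> young (tl lam)"
    obtain i j where bij: "b = (i,j)" by (cases b)
    show "Rm (Suc n) T b \<noteq> {}" using same[of i j] b svt_ne[OF T, of b] M unfolding Rm_def bij by auto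
    show "Rm (Suc n) T b \<subseteq> {1..n}" using svt_sub[OF T, of b] unfolding Rm_def by auto
  next
    fix b assume b: "b \<notin> young (tl lam)"
    obtain i j where bij: "b = (i,j)" by (cases b)
    show "Rm (Suc n) T b = {}"
    proof (cases "b \<in> young lam")
      case True
      then have "(i+1,j) \<notin> young lam" using b M bij by auto
      then have "T b = {Suc n}" using fixed_top[OF T A, of i j] True bij by auto
      then show ?thesis by (simp add: Rm_def)
    next
      case False then show ?thesis using svt_out[OF T False] by (simp add: Rm_def)
    qed
  next
    fix i j assume h: "(i, j) \<in> young (tl lam) \<and> (i, j + 1) \<in> young (tl lam)"
    then show "Max (Rm (Suc n) T (i, j)) \<le> Min (Rm (Suc n) T (i, j + 1))"
      using same[of i j] same[of i "j+1"] svt_h[OF T, of i j] M unfolding Rm_def by auto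
  next
    fix i j assume h: "(i, j) \<in> young (tl lam) \<and> (i + 1, j) \<in> young (tl lam)"
    then show "Max (Rm (Suc n) T (i, j)) < Min (Rm (Suc n) T (i + 1, j))"
      using same[of i j] same[of "i+1" j] svt_v[OF T, of i j] M unfolding Rm_def by auto
  qed
qed

lemma Ex_svt: assumes p: "is_partition lam" and T: "T \<in> SVT (tl lam) n"
  shows "Ex lam (Suc n) T \<in> SVT lam (Suc n)" "canA lam (Suc n) (Ex lam (Suc n) T) = {}"
proof -
  have M: "young (tl lam) = {(i,j). (i,j) \<in> young lam \<and> (i+1,j) \<in> young lam}" by (rule young_tl[OF p])
  show "Ex lam (Suc n) T \<in> SVT lam (Suc n)" unfolding SVT_def
  proof (intro CollectI conjI allI impI ballI)
    fix b assume b: "b \<in> young lam"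
    show "Ex lam (Suc n) T b \<noteq> {}"
    proof (cases "b \<in> young (tl lam)")
      case True then show ?thesis using svt_ne[OF T True] unfolding Ex_def by auto
    qed (use b in \<open>auto simp: Ex_def\<close>)
    show "Ex lam (Suc n) T b \<subseteq> {1..Suc n}" using svt_sub[OF T, of b] unfolding Ex_def by auto
  next
    fix b assume b: "b \<notin> young lam"
    then have bM: "b \<notin> young (tl lam)" using M by (cases b) auto
    then show "Ex lam (Suc n) T b = {}" using b svt_out[OF T bM] unfolding Ex_def by auto
  next
    fix i j assume h: "(i, j) \<in> young lam \<and> (i, j + 1) \<in> young lam"
    show "Max (Ex lam (Suc n) T (i, j)) \<le> Min (Ex lam (Suc n) T (i, j + 1))"
    proof (cases "(i,j+1) \<in> young (tl lam)")
      case True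
      have j1: "1 \<le> j" using h by (simp add: young_def)
      have "(i,j) \<in> young (tl lam)" using young_left[OF True j1] .
      then show ?thesis using True svt_h[OF T, of i j] unfolding Ex_def by auto
    next
      case False
      have "Max (Ex lam (Suc n) T (i, j)) \<le> Suc n"
      proof (cases "(i,j) \<in> young (tl lam)")
        case True then show ?thesis using svt_Max_le[OF T True] unfolding Ex_def by auto
      qed (use h in \<open>auto simp: Ex_def\<close>)
      then show ?thesis using False h unfolding Ex_def by auto
    qed
  next
    fix i j assume h: "(i, j) \<in> young lam \<and> (i + 1, j) \<in> young lam"
    then have ij: "(i,j) \<in> young (tl lam)" using M by auto
    have mx: "Max (T (i,j)) \<le> n" by (rule svt_Max_le[OF T ij])
    show "Max (Ex lam (Suc n) T (i, j)) < Min (Ex lam (Suc n) T (i + 1, j))"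
    proof (cases "(i+1,j) \<in> young (tl lam)")
      case True
      then show ?thesis using ij svt_v[OF T ij True] unfolding Ex_def by auto
    next
      case False
      then show ?thesis using ij h mx unfolding Ex_def by auto
    qed
  qed
  show "canA lam (Suc n) (Ex lam (Suc n) T) = {}"
    unfolding canA_def Ex_def using M by auto
qed

lemma fixed_bij: assumes p: "is_partition lam"
  shows "(\<Sum>T\<in>{T\<in>SVT lam (Suc n). canA lam (Suc n) T = {}}. sg lam T) = (\<Sum>T\<in>SVT (tl lam) n. sg (tl lam) T)"
proof -
  have M: "young (tl lam) = {(i,j). (i,j) \<in> young lam \<and> (i+1,j) \<in> young lam}" by (rule young_tl[OF p])
  have MY: "young (tl lam) \<subseteq> young lam" using M by auto
  show ?thesis
  proof (rule sum.reindex_bij_witness[of _ "Ex lam (Suc n)" "Rm (Suc n)"])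
    fix T assume T: "T \<in> {T\<in>SVT lam (Suc n). canA lam (Suc n) T = {}}"
    then have T1: "T \<in> SVT lam (Suc n)" and A: "canA lam (Suc n) T = {}" by auto
    show "Rm (Suc n) T \<in> SVT (tl lam) n" by (rule Rm_svt[OF p T1 A])
    show "Ex lam (Suc n) (Rm (Suc n) T) = T"
    proof (rule ext)
      fix b :: "nat \<times> nat"
      obtain i j where bij: "b = (i,j)" by (cases b)
      show "Ex lam (Suc n) (Rm (Suc n) T) b = T b"
      proof (cases "b \<in> young lam")
        case True
        show ?thesis
        proof (cases "b \<in> young (tl lam)")
          case True
          then show ?thesis using fixed_low[OF T1, of i j] M bij unfolding Ex_def Rm_def by auto
        next
          case False
          then show ?thesis using fixed_top[OF T1 A, of i j] M bij \<open>b \<in> young lam\<close>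
            unfolding Ex_def Rm_def by auto
        qed
      next
        case False
        then show ?thesis using svt_out[OF T1 False] MY unfolding Ex_def Rm_def by auto
      qed
    qed
    have ts: "tsize lam T = tsize (tl lam) (Rm (Suc n) T) + card (young lam - young (tl lam))"
    proof -
      have "tsize lam T = (\<Sum>b\<in>young lam - young (tl lam). card (T b)) + (\<Sum>b\<in>young (tl lam). card (T b))"
        unfolding tsize_def by (rule sum.subset_diff[OF MY finite_young])
      also have "(\<Sum>b\<in>young lam - young (tl lam). card (T b)) = (\<Sum>b\<in>young lam - young (tl lam). 1)"
      proof (rule sum.cong)
        fix b assume b: "b \<in> young lam - young (tl lam)"
        obtain i j where bij: "b = (i,j)" by (cases b)
        show "card (T b) = 1" using fixed_top[OF T1 A, of i j] b M bij by auto
      qed simp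
      also have "(\<Sum>b\<in>young (tl lam). card (T b)) = tsize (tl lam) (Rm (Suc n) T)"
        unfolding tsize_def Rm_def
      proof (rule sum.cong)
        fix b assume b: "b \<in> young (tl lam)"
        obtain i j where bij: "b = (i,j)" by (cases b)
        show "card (T b) = card (T b - {Suc n})" using fixed_low[OF T1, of i j] b M bij by auto
      qed simp
      finally show ?thesis by simp
    qed
    have ps: "psize lam = psize (tl lam) + card (young lam - young (tl lam))"
      using card_young[of lam] card_young[of "tl lam"] card_Diff_subset[OF finite_young MY]
        card_mono[OF finite_young MY] by simp
    show "sg (tl lam) (Rm (Suc n) T) = sg lam T"
      unfolding sg_def using ts ps by simp
  next
    fix T assume T: "T \<in> SVT (tl lam) n"
    show "Ex lam (Suc n) T \<in> {T\<in>SVT lam (Suc n). canA lam (Suc n) T = {}}"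
      using Ex_svt[OF p T] by simp
    show "Rm (Suc n) (Ex lam (Suc n) T) = T"
    proof (rule ext)
      fix b :: "nat \<times> nat"
      show "Rm (Suc n) (Ex lam (Suc n) T) b = T b"
      proof (cases "b \<in> young (tl lam)")
        case True
        then show ?thesis using svt_sub[OF T, of b] unfolding Rm_def Ex_def by auto
      next
        case False
        then show ?thesis using svt_out[OF T False] unfolding Rm_def Ex_def by auto
      qed
    qed
  qed
qed


lemma SVT_Nil: "SVT [] 0 = {\<lambda>_. {}}"
  by (auto simp: SVT_def fun_eq_iff)

lemma key: "is_partition lam \<Longrightarrow> length lam \<le> n \<Longrightarrow> (\<Sum>T\<in>SVT lam n. sg lam T) = 1"
proof (induction n arbitrary: lam)
  case 0
  then have "lam = []" by simp
  then show ?case by (simp add: SVT_Nil sg_def tsize_def psize_def)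
next
  case (Suc n)
  have "(\<Sum>T\<in>SVT lam (Suc n). sg lam T) = (\<Sum>T\<in>SVT (tl lam) n. sg (tl lam) T)"
    using sum_fixed[of lam "Suc n"] fixed_bij[OF Suc.prems(1), of n] by (rule trans)
  also have "\<dots> = 1" using Suc.IH[OF part_tl[OF Suc.prems(1)]] Suc.prems(2) by simp
  finally show ?case .
qed

lemma omega_sum: assumes T: "T \<in> SVT lam n" shows "(\<Sum>k=1..n. omega lam T k) = tsize lam T"
proof -
  have "(\<Sum>k=1..n. omega lam T k) = (\<Sum>k=1..n. \<Sum>b\<in>young lam. if k \<in> T b then 1 else 0)"
    unfolding omega_def
  proof (rule sum.cong)
    fix k
    show "card {b \<in> young lam. k \<in> T b} = (\<Sum>b\<in>young lam. if k \<in> T b then 1 else 0)"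
      using sum.inter_filter[OF finite_young, of "\<lambda>_. 1::nat" lam "\<lambda>b. k \<in> T b"] by simp
  qed simp
  also have "\<dots> = (\<Sum>b\<in>young lam. \<Sum>k=1..n. if k \<in> T b then 1 else 0)" by (rule sum.swap)
  also have "\<dots> = (\<Sum>b\<in>young lam. card (T b))"
  proof (rule sum.cong)
    fix b assume "b \<in> young lam"
    have "(\<Sum>k=1..n. if k \<in> T b then 1 else 0) = card {k\<in>{1..n}. k \<in> T b}"
      using sum.inter_filter[of "{1..n}" "\<lambda>_. 1::nat" "\<lambda>k. k \<in> T b"] by simp
    also have "{k\<in>{1..n}. k \<in> T b} = T b" using svt_sub[OF T, of b] by auto
    finally show "(\<Sum>k=1..n. if k \<in> T b then 1 else 0) = card (T b)" .
  qed simp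
  finally show ?thesis by (simp add: tsize_def)
qed

lemma pow_id: fixes \<beta> :: complex assumes "\<beta> \<noteq> 0"
  shows "(- inverse \<beta>) ^ d * \<beta> ^ (p + d) = (-1) ^ d * \<beta> ^ p"
proof -
  have i: "inverse \<beta> ^ d * \<beta> ^ d = 1"
    by (metis assms left_inverse power_mult_distrib power_one)
  have m: "(- inverse \<beta>) ^ d = (-1) ^ d * inverse \<beta> ^ d"
    by (metis mult_minus1 power_mult_distrib)
  have "(- inverse \<beta>) ^ d * \<beta> ^ (p + d) = (-1) ^ d * (inverse \<beta> ^ d * \<beta> ^ d) * \<beta> ^ p"
    unfolding m power_add by (simp only: mult_ac)
  then show ?thesis unfolding i by simp
qed

theorem theoremA1:
  fixes n :: nat and lam :: "nat list" and \<beta> :: complex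
  assumes "0 < n" and "is_partition lam" and "length lam \<le> n" and "\<beta> \<noteq> 0"
  shows "stableG lam n (\<lambda>_. \<beta>) (- inverse \<beta>) = \<beta> ^ psize lam"
proof -
  have "stableG lam n (\<lambda>_. \<beta>) (- inverse \<beta>) = (\<Sum>T\<in>SVT lam n. \<beta> ^ psize lam * sg lam T)"
    unfolding stableG_def
  proof (rule sum.cong)
    fix T assume T: "T \<in> SVT lam n"
    have pr: "(\<Prod>k=1..n. \<beta> ^ omega lam T k) = \<beta> ^ tsize lam T"
      using power_sum[of \<beta> "omega lam T" "{1..n}"] omega_sum[OF T] by simp
    obtain d where d: "tsize lam T = psize lam + d" using tsize_ge[OF T] le_Suc_ex by blast
    show "(- inverse \<beta>) ^ (tsize lam T - psize lam) * (\<Prod>k=1..n. \<beta> ^ omega lam T k) =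
          \<beta> ^ psize lam * sg lam T"
      unfolding pr sg_def d using pow_id[OF assms(4), of d "psize lam"] by simp
  qed simp
  also have "\<dots> = \<beta> ^ psize lam * (\<Sum>T\<in>SVT lam n. sg lam T)" by (rule sum_distrib_left[symmetric])
  also have "\<dots> = \<beta> ^ psize lam" using key[OF assms(2,3)] by simp
  finally show ?thesis .
qed

end
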